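(* Let $G=(V,E)$ be a graph with $V=[n]$ and no self-loops, and let $q_G(x)=\sum_{\{i,j\}\in E}a_{ij}x_ix_j+\sum_{i\in V}c_ix_i+c_0$ be positive on $[0,1]^n$. Let \[ \mathcal{G}_G=\Bigl\{\frac{(1,x,z)}{q_G(x)}\Bigm| x\in[0,1]^n,\ z_{ij}=x_ix_j\ \text{for }\{i,j\}\in E\Bigr\}. \] Then \[ \operatorname{conv}(\mathcal{G}_G)=\Bigl\{(\rho,y,w)\Bigm| (y,w)\in\rho\,\mathrm{QP}_G,\ \rho\ge0,\ \sum_{\{i,j\}\in E}a_{ij}w_{ij}+\sum_{i\in V}c_iy_i+c_0\rho=1\Bigr\}, \] and $\mathrm{QP}_G=\{(x,z)\mid (1,x,z)\in\sigma\operatorname{conv}(\mathcal{G}_G),\ \sigma\ge0\}$.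
   Context: The boolean quadric polytope $\mathrm{QP}_G$ is the convex hull of $\{(x,z)\in\mathbb{R}^{|V|+|E|}\mid x\in\{0,1\}^{|V|},\ z_{ij}=x_ix_j\ \text{for }\{i,j\}\in E\}$. For a set $K$, $\lambda K=\{\lambda k\mid k\in K\}$ for $\lambda>0$ and $0K$ is the recession cone of $K$. *)

theory Defs
  imports "HOL-Analysis.Analysis"
begin

text \<open>Vertices: the finite type 'n (standing for [n]).  The z-coordinates are indexed by all
  subsets of the vertices; coordinates not corresponding to an edge are fixed to 0.\<close>

definition simple_edges :: "'n set set \<Rightarrow> bool" where
  "simple_edges E \<longleftrightarrow> (\<forall>e\<in>E. \<exists>i j. i \<noteq> j \<and> e = {i, j})"

definition edge_lift :: "'n::finite set set \<Rightarrow> real^'n \<Rightarrow> real^('n set) \<Rightarrow> bool" where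
  "edge_lift E x z \<longleftrightarrow> (\<forall>i j. {i, j} \<in> E \<longrightarrow> z $ {i, j} = x $ i * x $ j) \<and> (\<forall>e. e \<notin> E \<longrightarrow> z $ e = 0)"

definition QP :: "'n::finite set set \<Rightarrow> ((real^'n) \<times> (real^('n set))) set" where
  "QP E = convex hull {(x, z). (\<forall>i. x $ i \<in> {0, 1}) \<and> edge_lift E x z}"

definition qG :: "'n::finite set set \<Rightarrow> ('n set \<Rightarrow> real) \<Rightarrow> ('n \<Rightarrow> real) \<Rightarrow> real \<Rightarrow> real^'n \<Rightarrow> real" where
  "qG E a c c0 x = (\<Sum>e\<in>E. a e * (\<Prod>i\<in>e. x $ i)) + (\<Sum>i\<in>UNIV. c i * x $ i) + c0"

definition GG :: "'n::finite set set \<Rightarrow> ('n set \<Rightarrow> real) \<Rightarrow> ('n \<Rightarrow> real) \<Rightarrow> real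
    \<Rightarrow> (real \<times> (real^'n) \<times> (real^('n set))) set" where
  "GG E a c c0 = {(1 / qG E a c c0 x) *\<^sub>R (1, x, z) | x z.
      (\<forall>i. 0 \<le> x $ i \<and> x $ i \<le> 1) \<and> edge_lift E x z}"

definition rec_cone :: "'a::real_vector set \<Rightarrow> 'a set" where
  "rec_cone K = {d. \<forall>k\<in>K. \<forall>t::real. t \<ge> 0 \<longrightarrow> k + t *\<^sub>R d \<in> K}"

definition scale_set :: "real \<Rightarrow> 'a::real_vector set \<Rightarrow> 'a set" where
  "scale_set r K = (if r = 0 then rec_cone K else (\<lambda>k. r *\<^sub>R k) ` K)"

end

theory Submission
  imports Defs
begin

definition lft :: "'n::finite set set \<Rightarrow> real^'n \<Rightarrow> real^('n set)" where
  "lft E x = (\<chi> e. if e \<in> E then \<Prod>i\<in>e. x$i else 0)"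

definition ell :: "'n::finite set set \<Rightarrow> ('n set \<Rightarrow> real) \<Rightarrow> ('n \<Rightarrow> real) \<Rightarrow> ((real^'n) \<times> (real^('n set))) \<Rightarrow> real" where
  "ell E a c p = (\<Sum>e\<in>E. a e * snd p $ e) + (\<Sum>i\<in>UNIV. c i * fst p $ i)"

lemma ell_add: "ell E a c (p + q) = ell E a c p + ell E a c q"
  by (simp add: ell_def sum.distrib distrib_left)

lemma ell_scale: "ell E a c (r *\<^sub>R p) = r * ell E a c p"
  by (simp add: ell_def sum_distrib_left distrib_left algebra_simps)

lemma ell_sum: "finite S \<Longrightarrow> ell E a c (\<Sum>x\<in>S. f x) = (\<Sum>x\<in>S. ell E a c (f x))"
  by (induction S rule: finite_induct) (auto simp: ell_add, simp add: ell_def)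

lemma edge_lift_iff:
  assumes "simple_edges E"
  shows "edge_lift E x z \<longleftrightarrow> z = lft E x"
proof
  assume h: "edge_lift E x z"
  show "z = lft E x"
  proof (rule vec_eq_iff[THEN iffD2], rule allI)
    fix e
    show "z $ e = lft E x $ e"
    proof (cases "e \<in> E")
      case True
      then obtain i j where ij: "i \<noteq> j" "e = {i, j}" using assms unfolding simple_edges_def by blast
      then show ?thesis using h True unfolding edge_lift_def lft_def by simp
    next
      case False then show ?thesis using h unfolding edge_lift_def lft_def by simp
    qed
  qed
next
  assume "z = lft E x"
  moreover have "i \<noteq> j" if "{i, j} \<in> E" for i j
  proof
    assume "i = j"
    then have "{i} \<in> E" using that by simp
    then obtain i' j' where "i' \<noteq> j'" "{i} = {i', j'}" using assms unfolding simple_edges_def by blast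
    then show False by (metis doubleton_eq_iff insert_absorb2)
  qed
  ultimately show "edge_lift E x z" unfolding edge_lift_def lft_def
    by auto
qed

lemma ell_lft: "ell E a c (x, lft E x) + c0 = qG E a c c0 x"
  unfolding ell_def qG_def lft_def by (simp cong: sum.cong)

definition upd :: "real^'n \<Rightarrow> 'n \<Rightarrow> real \<Rightarrow> real^'n" where
  "upd x k t = (\<chi> l. if l = k then t else x $ l)"

lemma prod_upd:
  fixes e :: "'n::finite set"
  shows "(\<Prod>i\<in>e. upd x k t $ i) = t * (\<Prod>i\<in>e. upd x k 1 $ i) + (1 - t) * (\<Prod>i\<in>e. upd x k 0 $ i)"
proof (cases "k \<in> e")
  case True
  have "\<And>s. (\<Prod>i\<in>e. upd x k s $ i) = s * (\<Prod>i\<in>e - {k}. x $ i)"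
  proof -
    fix s
    have "(\<Prod>i\<in>e. upd x k s $ i) = upd x k s $ k * (\<Prod>i\<in>e - {k}. upd x k s $ i)"
      by (rule prod.remove[OF finite True])
    also have "(\<Prod>i\<in>e - {k}. upd x k s $ i) = (\<Prod>i\<in>e - {k}. x $ i)"
      by (rule prod.cong) (auto simp: upd_def)
    finally show "(\<Prod>i\<in>e. upd x k s $ i) = s * (\<Prod>i\<in>e - {k}. x $ i)" by (simp add: upd_def)
  qed
  then show ?thesis by (simp add: algebra_simps)
next
  case False
  then have "\<And>s. (\<Prod>i\<in>e. upd x k s $ i) = (\<Prod>i\<in>e. x $ i)"
    by (auto simp: upd_def intro!: prod.cong)
  then show ?thesis by (simp add: algebra_simps)
qed

lemma lft_upd: "(upd x k t, lft E (upd x k t)) = t *\<^sub>R (upd x k 1, lft E (upd x k 1)) + (1 - t) *\<^sub>R (upd x k 0, lft E (upd x k 0))"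
proof -
  have "upd x k t = t *\<^sub>R upd x k 1 + (1 - t) *\<^sub>R upd x k 0"
    by (simp add: vec_eq_iff upd_def algebra_simps)
  moreover have "lft E (upd x k t) = t *\<^sub>R lft E (upd x k 1) + (1 - t) *\<^sub>R lft E (upd x k 0)"
    unfolding vec_eq_iff lft_def using prod_upd[where x=x and k=k and t=t] by auto
  ultimately show ?thesis by simp
qed

lemma upd_same: "upd x k (x $ k) = x"
  by (simp add: vec_eq_iff upd_def)

lemma lift_in_QP:
  assumes "simple_edges E" and "\<forall>i. 0 \<le> x $ i \<and> x $ i \<le> 1"
  shows "(x, lft E x) \<in> QP E"
proof -
  have "\<forall>x. card {i. x $ i \<notin> {0,1}} = n \<longrightarrow> (\<forall>i. 0 \<le> x $ i \<and> x $ i \<le> 1) \<longrightarrow> (x, lft E x) \<in> QP E" for n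
  proof (induction n rule: less_induct)
    case (less n)
    show ?case
    proof (intro allI impI)
      fix x :: "real^'a"
      assume cn: "card {i. x $ i \<notin> {0,1}} = n" and box: "\<forall>i. 0 \<le> x $ i \<and> x $ i \<le> 1"
      show "(x, lft E x) \<in> QP E"
      proof (cases "{i. x $ i \<notin> {0,1}} = {}")
        case True
        then have "(x, lft E x) \<in> {(x, z). (\<forall>i. x $ i \<in> {0, 1}) \<and> edge_lift E x z}"
          using edge_lift_iff[OF assms(1)] by auto
        then show ?thesis unfolding QP_def by (rule hull_inc)
      next
        case False
        then obtain k where k: "x $ k \<notin> {0,1}" by auto
        have sub: "{i. upd x k s $ i \<notin> {0,1}} \<subset> {i. x $ i \<notin> {0,1}}" if "s \<in> {0,1}" for s
          using k that by (auto simp: upd_def split: if_splits)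
        have lt: "card {i. upd x k s $ i \<notin> {0,1}} < n" if "s \<in> {0,1}" for s
          using psubset_card_mono[OF finite sub[OF that]] cn by simp
        have bx: "\<forall>i. 0 \<le> upd x k s $ i \<and> upd x k s $ i \<le> 1" if "s \<in> {0,1}" for s
          using box that by (auto simp: upd_def)
        have m1: "(upd x k 1, lft E (upd x k 1)) \<in> QP E"
          using less.IH[OF lt[of 1]] bx[of 1] by auto
        have m0: "(upd x k 0, lft E (upd x k 0)) \<in> QP E"
          using less.IH[OF lt[of 0]] bx[of 0] by auto
        have "(x $ k) *\<^sub>R (upd x k 1, lft E (upd x k 1)) + (1 - x $ k) *\<^sub>R (upd x k 0, lft E (upd x k 0)) \<in> QP E"
          using convexD[OF convex_convex_hull m1[unfolded QP_def] m0[unfolded QP_def]] box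
          unfolding QP_def by auto
        then show ?thesis using lft_upd[of x k "x $ k" E] upd_same[of x k] by simp
      qed
    qed
  qed
  then show ?thesis using assms(2) by blast
qed

lemma sum_pair1: "finite S \<Longrightarrow> (\<Sum>v\<in>S. f v *\<^sub>R (1::real, g v)) = (\<Sum>v\<in>S. f v, \<Sum>v\<in>S. f v *\<^sub>R g v)"
  by (induction S rule: finite_induct) (auto simp: zero_prod_def)

lemma binary_finite: "finite {x::real^'n::finite. \<forall>i. x $ i \<in> {0,1}}"
proof -
  have "{x::real^'n. \<forall>i. x $ i \<in> {0,1}} \<subseteq> (\<lambda>S. \<chi> i. if i \<in> S then 1 else 0) ` UNIV"
  proof
    fix x :: "real^'n" assume "x \<in> {x. \<forall>i. x $ i \<in> {0,1}}"
    then have "x = (\<chi> i. if i \<in> {i. x $ i = 1} then 1 else 0)" by (auto simp: vec_eq_iff)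
    then show "x \<in> (\<lambda>S. \<chi> i. if i \<in> S then 1 else 0) ` UNIV" by blast
  qed
  then show ?thesis by (rule finite_subset) simp
qed

lemma rec_cone_bounded_ell:
  assumes "q0 \<in> P" "\<And>q. q \<in> P \<Longrightarrow> ell E a c q \<le> M" "d \<in> rec_cone P"
  shows "ell E a c d \<le> 0"
proof (rule ccontr)
  assume "\<not> ell E a c d \<le> 0"
  then have pos: "ell E a c d > 0" by simp
  define t where "t = (M - ell E a c q0 + 1) / ell E a c d"
  have t0: "t \<ge> 0" using assms(2)[OF assms(1)] pos by (simp add: t_def)
  have "q0 + t *\<^sub>R d \<in> P" using assms(3) assms(1) t0 unfolding rec_cone_def by blast
  then have "ell E a c (q0 + t *\<^sub>R d) \<le> M" by (rule assms(2))
  moreover have "ell E a c (q0 + t *\<^sub>R d) = M + 1"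
    using pos by (simp add: ell_add ell_scale t_def)
  ultimately show False by simp
qed

theorem proposition2:
  fixes E :: "'n::finite set set" and a :: "'n set \<Rightarrow> real" and c :: "'n \<Rightarrow> real" and c0 :: real
  assumes "simple_edges E"
    and "\<And>x. (\<forall>i. 0 \<le> x $ i \<and> x $ i \<le> 1) \<Longrightarrow> qG E a c c0 x > 0"
  shows "convex hull (GG E a c c0) =
           {(\<rho>, y, w). (y, w) \<in> scale_set \<rho> (QP E) \<and> \<rho> \<ge> 0 \<and>
              (\<Sum>e\<in>E. a e * w $ e) + (\<Sum>i\<in>UNIV. c i * y $ i) + c0 * \<rho> = 1}
         \<and> QP E = {(x, z). \<exists>\<sigma>\<ge>0. (1, x, z) \<in> scale_set \<sigma> (convex hull (GG E a c c0))}"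
proof -
  define B where "B = {x::real^'n. \<forall>i. x $ i \<in> {0,1}}"
  define V where "V = {(x, z). (\<forall>i. x $ i \<in> {0, 1}) \<and> edge_lift E x z}"
  define P where "P = QP E"
  define L1 where "L1 q = ell E a c q + c0" for q
  have V: "V = (\<lambda>b. (b, lft E b)) ` B"
    unfolding V_def B_def using edge_lift_iff[OF assms(1)] by auto
  have finB: "finite B" unfolding B_def by (rule binary_finite)
  have finV: "finite V" unfolding V using finB by simp
  have B0: "0 \<in> B" unfolding B_def by simp
  have Bbox: "\<forall>i. 0 \<le> b $ i \<and> b $ i \<le> 1" if "b \<in> B" for b
  proof
    fix i
    have "b $ i \<in> {0,1}" using that unfolding B_def by blast
    then show "0 \<le> b $ i \<and> b $ i \<le> 1" by auto
  qed
  have PV: "P = convex hull V" unfolding P_def QP_def V_def ..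
  define m where "m = Min (qG E a c c0 ` B)"
  define M where "M = Max (qG E a c c0 ` B)"
  have m0: "m > 0" unfolding m_def using finB B0 assms(2) Bbox by (subst Min_gr_iff) auto
  have L1lft: "L1 (b, lft E b) = qG E a c c0 b" for b unfolding L1_def by (rule ell_lft)
  have bnd: "m \<le> L1 q \<and> L1 q \<le> M" if "q \<in> P" for q
  proof -
    have "P \<subseteq> {q. m \<le> L1 q \<and> L1 q \<le> M}"
      unfolding PV
    proof (rule hull_minimal)
      show "V \<subseteq> {q. m \<le> L1 q \<and> L1 q \<le> M}"
        unfolding V m_def M_def using finB L1lft by auto
      show "convex {q. m \<le> L1 q \<and> L1 q \<le> M}"
      proof (rule convexI)
        fix p q :: "(real^'n) \<times> (real^('n set))" and u v :: real
        assume hh: "p \<in> {q. m \<le> L1 q \<and> L1 q \<le> M}" "q \<in> {q. m \<le> L1 q \<and> L1 q \<le> M}"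
          "0 \<le> u" "0 \<le> v" "u + v = 1"
        have "L1 (u *\<^sub>R p + v *\<^sub>R q) = u * ell E a c p + v * ell E a c q + (u + v) * c0"
          using \<open>u + v = 1\<close> unfolding L1_def ell_add ell_scale by simp
        also have "\<dots> = u * L1 p + v * L1 q" unfolding L1_def by (simp add: algebra_simps)
        finally have eq: "L1 (u *\<^sub>R p + v *\<^sub>R q) = u * L1 p + v * L1 q" .
        have "u * m + v * m \<le> u * L1 p + v * L1 q"
          using hh by (intro add_mono mult_left_mono) auto
        moreover have "u * L1 p + v * L1 q \<le> u * M + v * M"
          using hh by (intro add_mono mult_left_mono) auto
        ultimately show "u *\<^sub>R p + v *\<^sub>R q \<in> {q. m \<le> L1 q \<and> L1 q \<le> M}"
          using eq \<open>u + v = 1\<close> by (simp add: distrib_right[symmetric])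
      qed
    qed
    then show ?thesis using that by auto
  qed
  have P0: "(0, lft E 0) \<in> P" unfolding P_def by (rule lift_in_QP[OF assms(1)]) simp
  have ellM: "ell E a c q \<le> M - c0" if "q \<in> P" for q using bnd[OF that] unfolding L1_def by simp
  have recP: "ell E a c d \<le> 0" if "d \<in> rec_cone P" for d
    by (rule rec_cone_bounded_ell[OF P0 ellM that])
  define R' where "R' = {(\<rho>, p). \<rho> > 0 \<and> (\<exists>q\<in>P. p = \<rho> *\<^sub>R q) \<and> ell E a c p + c0 * \<rho> = 1}"
  have R_eq: "{(\<rho>, y, w). (y, w) \<in> scale_set \<rho> (QP E) \<and> \<rho> \<ge> 0 \<and>
              (\<Sum>e\<in>E. a e * w $ e) + (\<Sum>i\<in>UNIV. c i * y $ i) + c0 * \<rho> = 1} = R'"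
  proof (rule set_eqI)
    fix t :: "real \<times> (real^'n) \<times> (real^('n set))"
    obtain \<rho> y w where t: "t = (\<rho>, y, w)" by (cases t) auto
    have ex: "(\<Sum>e\<in>E. a e * w $ e) + (\<Sum>i\<in>UNIV. c i * y $ i) + c0 * \<rho> = ell E a c (y, w) + c0 * \<rho>"
      by (simp add: ell_def)
    show "t \<in> {(\<rho>, y, w). (y, w) \<in> scale_set \<rho> (QP E) \<and> \<rho> \<ge> 0 \<and>
              (\<Sum>e\<in>E. a e * w $ e) + (\<Sum>i\<in>UNIV. c i * y $ i) + c0 * \<rho> = 1} \<longleftrightarrow> t \<in> R'"
    proof (cases "\<rho> = 0")
      case True
      have "\<not> ((y, w) \<in> rec_cone P \<and> ell E a c (y, w) = 1)" using recP by force
      then show ?thesis unfolding t R'_def using True ex by (simp add: scale_set_def P_def)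
    next
      case False
      then show ?thesis unfolding t R'_def using ex
        by (auto simp: scale_set_def P_def)
    qed
  qed
  have convR: "convex R'"
  proof (rule convexI)
    fix t1 t2 :: "real \<times> (real^'n) \<times> (real^('n set))" and u v :: real
    assume h: "t1 \<in> R'" "t2 \<in> R'" "0 \<le> u" "0 \<le> v" "u + v = 1"
    obtain r1 q1 where 1: "t1 = (r1, r1 *\<^sub>R q1)" "r1 > 0" "q1 \<in> P" "ell E a c (r1 *\<^sub>R q1) + c0 * r1 = 1"
      using h(1) unfolding R'_def by auto
    obtain r2 q2 where 2: "t2 = (r2, r2 *\<^sub>R q2)" "r2 > 0" "q2 \<in> P" "ell E a c (r2 *\<^sub>R q2) + c0 * r2 = 1"
      using h(2) unfolding R'_def by auto
    define r where "r = u * r1 + v * r2"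
    have r0: "r > 0"
    proof (cases "u = 0")
      case True then show ?thesis using h 2 by (simp add: r_def)
    next
      case False
      then have "u * r1 > 0" using h 1 by simp
      moreover have "v * r2 \<ge> 0" using h 2 by simp
      ultimately show ?thesis unfolding r_def by linarith
    qed
    define q where "q = (u * r1 / r) *\<^sub>R q1 + (v * r2 / r) *\<^sub>R q2"
    have qP: "q \<in> P" unfolding q_def PV
      by (rule convexD[OF convex_convex_hull]) (use 1 2 h r0 in \<open>auto simp: PV r_def add_divide_distrib[symmetric]\<close>)
    have rq: "r *\<^sub>R q = u *\<^sub>R (r1 *\<^sub>R q1) + v *\<^sub>R (r2 *\<^sub>R q2)"
      unfolding q_def using r0 by (simp add: scaleR_add_right)
    have "ell E a c (r *\<^sub>R q) + c0 * r = u * (ell E a c (r1 *\<^sub>R q1) + c0 * r1) + v * (ell E a c (r2 *\<^sub>R q2) + c0 * r2)"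
    proof -
      have "ell E a c (r *\<^sub>R q) = u * ell E a c (r1 *\<^sub>R q1) + v * ell E a c (r2 *\<^sub>R q2)"
        unfolding rq ell_add ell_scale[of E a c u] ell_scale[of E a c v] ..
      then show ?thesis by (simp add: r_def algebra_simps)
    qed
    also have "\<dots> = 1" using 1 2 h by simp
    finally have "ell E a c (r *\<^sub>R q) + c0 * r = 1" .
    moreover have "u *\<^sub>R t1 + v *\<^sub>R t2 = (r, r *\<^sub>R q)" using 1 2 rq by (simp add: r_def)
    ultimately show "u *\<^sub>R t1 + v *\<^sub>R t2 \<in> R'" unfolding R'_def using r0 qP by auto
  qed
  have GGR: "GG E a c c0 \<subseteq> R'"
  proof
    fix t assume "t \<in> GG E a c c0"
    then obtain x z where t: "t = (1 / qG E a c c0 x) *\<^sub>R (1, x, z)"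
      and box: "\<forall>i. 0 \<le> x $ i \<and> x $ i \<le> 1" and el: "edge_lift E x z"
      unfolding GG_def by auto
    have z: "z = lft E x" using el edge_lift_iff[OF assms(1)] by simp
    define r where "r = 1 / qG E a c c0 x"
    have qpos: "qG E a c c0 x > 0" using assms(2) box by simp
    have "ell E a c (r *\<^sub>R (x, z)) + c0 * r = r * (ell E a c (x, lft E x) + c0)"
      unfolding ell_scale z by (simp add: algebra_simps)
    also have "\<dots> = 1" unfolding ell_lft r_def using qpos by simp
    finally have "ell E a c (r *\<^sub>R (x, z)) + c0 * r = 1" .
    moreover have "(x, z) \<in> P" unfolding P_def z by (rule lift_in_QP[OF assms(1) box])
    moreover have "t = (r, r *\<^sub>R (x, z))" unfolding t r_def by simp
    moreover have "r > 0" unfolding r_def using qpos by simp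
    ultimately show "t \<in> R'" unfolding R'_def by (auto intro!: bexI[of _ "(x, z)"])
  qed
  have RH: "R' \<subseteq> convex hull (GG E a c c0)"
  proof
    fix t assume "t \<in> R'"
    then obtain r q where t: "t = (r, r *\<^sub>R q)" and r0: "r > 0" and qP: "q \<in> P"
      and L: "ell E a c (r *\<^sub>R q) + c0 * r = 1"
      unfolding R'_def by auto
    obtain u where u0: "\<forall>v\<in>V. 0 \<le> u v" and u1: "sum u V = 1" and uq: "(\<Sum>v\<in>V. u v *\<^sub>R v) = q"
      using qP unfolding PV convex_hull_finite[OF finV] by auto
    have Vpos: "L1 v > 0" and VG: "(1 / L1 v) *\<^sub>R (1, v) \<in> GG E a c c0" if vV: "v \<in> V" for v
    proof -
      obtain b where b: "b \<in> B" "v = (b, lft E b)" using vV unfolding V by auto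
      show "L1 v > 0" using b L1lft assms(2) Bbox by simp
      have "edge_lift E b (lft E b)" using edge_lift_iff[OF assms(1)] by simp
      then show "(1 / L1 v) *\<^sub>R (1, v) \<in> GG E a c c0"
        unfolding GG_def using b L1lft Bbox by (intro CollectI exI[of _ b] exI[of _ "lft E b"]) auto
    qed
    define \<mu> where "\<mu> v = r * u v * L1 v" for v
    have "(\<Sum>v\<in>V. u v * L1 v) = ell E a c q + c0"
    proof -
      have "(\<Sum>v\<in>V. u v * L1 v) = (\<Sum>v\<in>V. ell E a c (u v *\<^sub>R v)) + c0 * sum u V"
        unfolding L1_def ell_scale by (simp add: algebra_simps sum.distrib sum_distrib_left)
      also have "\<dots> = ell E a c q + c0" using u1 uq ell_sum[OF finV, of E a c "\<lambda>v. u v *\<^sub>R v"] by simp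
      finally show ?thesis .
    qed
    then have s1: "sum \<mu> V = 1"
      using L unfolding \<mu>_def ell_scale by (simp add: sum_distrib_left[symmetric] mult.assoc algebra_simps)
    have "(\<Sum>v\<in>V. \<mu> v *\<^sub>R ((1 / L1 v) *\<^sub>R (1, v))) = (\<Sum>v\<in>V. (r * u v) *\<^sub>R (1::real, v))"
    proof (rule sum.cong[OF refl])
      fix v assume "v \<in> V"
      then have "L1 v \<noteq> 0" using Vpos[of v] by simp
      then show "\<mu> v *\<^sub>R ((1 / L1 v) *\<^sub>R (1, v)) = (r * u v) *\<^sub>R (1::real, v)"
        by (simp add: \<mu>_def)
    qed
    also have "\<dots> = (\<Sum>v\<in>V. r * u v, \<Sum>v\<in>V. (r * u v) *\<^sub>R v)" by (rule sum_pair1[OF finV])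
    also have "\<dots> = t"
    proof -
      have "(\<Sum>v\<in>V. (r * u v) *\<^sub>R v) = r *\<^sub>R (\<Sum>v\<in>V. u v *\<^sub>R v)" by (simp add: scaleR_sum_right)
      then show ?thesis unfolding t using u1 uq by (simp add: sum_distrib_left[symmetric])
    qed
    finally have eqt: "(\<Sum>v\<in>V. \<mu> v *\<^sub>R ((1 / L1 v) *\<^sub>R (1, v))) = t" .
    have "(\<Sum>v\<in>V. \<mu> v *\<^sub>R ((1 / L1 v) *\<^sub>R (1, v))) \<in> convex hull (GG E a c c0)"
    proof (rule convex_sum[OF finV convex_convex_hull s1])
      fix v assume v: "v \<in> V"
      show "0 \<le> \<mu> v" unfolding \<mu>_def using u0 v Vpos[OF v] r0 by simp
    next
      fix v assume v: "v \<in> V"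
      show "(1 / L1 v) *\<^sub>R (1, v) \<in> convex hull (GG E a c c0)" using VG[OF v] by (rule hull_inc)
    qed
    then show "t \<in> convex hull (GG E a c c0)" using eqt by simp
  qed
  have H: "convex hull (GG E a c c0) = R'"
    using RH GGR convR by (simp add: hull_minimal subset_antisym)
  have inR: "(1 / L1 q, (1 / L1 q) *\<^sub>R q) \<in> R'" if qP: "q \<in> P" for q
  proof -
    have pos: "L1 q > 0" using bnd[OF qP] m0 by linarith
    have "ell E a c ((1 / L1 q) *\<^sub>R q) + c0 * (1 / L1 q) = (ell E a c q + c0) / L1 q"
      unfolding ell_scale by (simp add: divide_simps)
    also have "\<dots> = 1" using pos unfolding L1_def by simp
    finally show ?thesis unfolding R'_def using pos qP by auto
  qed
  have Rbound: "fst t \<le> 1 / m" if tR: "t \<in> R'" for t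
  proof -
    obtain r q where t: "t = (r, r *\<^sub>R q)" and r0: "r > 0" and qP: "q \<in> P"
      and L: "ell E a c (r *\<^sub>R q) + c0 * r = 1"
      using tR unfolding R'_def by auto
    have "r * L1 q = 1" using L unfolding L1_def ell_scale by (simp add: algebra_simps)
    moreover have "m \<le> L1 q" using bnd[OF qP] by simp
    ultimately have "r * m \<le> 1" using r0 by (metis mult_left_mono less_imp_le)
    then show ?thesis unfolding t using m0 by (simp add: divide_simps mult.commute)
  qed
  have C2: "P = {(x, z). \<exists>\<sigma>\<ge>0. (1, x, z) \<in> scale_set \<sigma> R'}"
  proof (rule set_eqI)
    fix p :: "(real^'n) \<times> (real^('n set))"
    obtain x z where p: "p = (x, z)" by (cases p)
    show "p \<in> P \<longleftrightarrow> p \<in> {(x, z). \<exists>\<sigma>\<ge>0. (1, x, z) \<in> scale_set \<sigma> R'}"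
    proof
      assume pP: "p \<in> P"
      have pos: "L1 p > 0" using bnd[OF pP] m0 by linarith
      have e: "(1::real, x, z) = L1 p *\<^sub>R (1 / L1 p, (1 / L1 p) *\<^sub>R p)" using pos p by simp
      have "(1::real, x, z) \<in> scale_set (L1 p) R'"
      proof -
        have "L1 p *\<^sub>R (1 / L1 p, (1 / L1 p) *\<^sub>R p) \<in> (\<lambda>k. L1 p *\<^sub>R k) ` R'"
          by (rule imageI, rule inR[OF pP])
        then show ?thesis unfolding scale_set_def using pos e by simp
      qed
      then show "p \<in> {(x, z). \<exists>\<sigma>\<ge>0. (1, x, z) \<in> scale_set \<sigma> R'}"
        using pos \<open>(1::real, x, z) \<in> scale_set (L1 p) R'\<close> unfolding p by (auto intro!: exI[of _ "L1 (x, z)"] less_imp_le)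
    next
      assume "p \<in> {(x, z). \<exists>\<sigma>\<ge>0. (1, x, z) \<in> scale_set \<sigma> R'}"
      then obtain \<sigma> where s0: "\<sigma> \<ge> 0" and sm: "(1::real, x, z) \<in> scale_set \<sigma> R'" unfolding p by (auto intro!: exI[of _ "L1 (x, z)"] less_imp_le)
      show "p \<in> P"
      proof (cases "\<sigma> = 0")
        case True
        then have rc: "(1::real, x, z) \<in> rec_cone R'" using sm unfolding scale_set_def by simp
        have k: "(1 / L1 (0, lft E 0), (1 / L1 (0, lft E 0)) *\<^sub>R (0, lft E 0)) \<in> R'" (is "?k \<in> R'")
          by (rule inR[OF P0])
        have "?k + (1 / m) *\<^sub>R (1::real, x, z) \<in> R'"
          using rc k m0 unfolding rec_cone_def by auto
        from Rbound[OF this] have "fst ?k \<le> 0" by simp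
        moreover have "fst ?k > 0" using bnd[OF P0] m0 by simp
        ultimately show ?thesis by simp
      next
        case False
        then obtain k where k: "k \<in> R'" and eq: "(1::real, x, z) = \<sigma> *\<^sub>R k"
          using sm unfolding scale_set_def by auto
        obtain r q where kt: "k = (r, r *\<^sub>R q)" and qP: "q \<in> P"
          using k unfolding R'_def by auto
        have "\<sigma> * r = 1" using eq kt by simp
        then have "(x, z) = q" using eq kt by simp
        then show ?thesis using p qP by simp
      qed
    qed
  qed
  show ?thesis using H R_eq C2 unfolding P_def by simp
qed

end
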